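(* Every CQAP $Q\in\mathrm{CQAP}_0$ with at least one variable has dynamic width $\delta(Q)=0$ and static width $\mathsf w(Q)=1$.
   Context: CQAP. A conjunctive query with free access patterns (CQAP) has the form $Q(\mathcal O\mid\mathcal I)=R_1(\mathcal X_1),\dots,R_n(\mathcal X_n)$, where $R_i(\mathcal X_i)$ are atoms, $\mathit{vars}(Q)=\bigcup_i\mathcal X_i$, and the free variables $\mathcal O\cup\mathcal I\subseteq\mathit{vars}(Q)$ are partitioned into input variables $\mathcal I$ and output variables $\mathcal O$ (either may be empty); the other variables are bound. $\mathit{atoms}(X)$ denotes the set of atoms whose schema contains $X$. Fracture. The fracture $Q_\dagger$ of $Q$ is obtained by: replacing every occurrence of an input variable in every atom by a distinct fresh variable; computing the connected components of the hypergraph of the resulting query (vertices = variables, hyperedges = atom schemas); within each connected component, replacing all fresh variables originating from the same input variable of $Q$ by one fresh input variable. Output and bound variables are unchanged. Structural classes. $B$ dominates $A$ if $\mathit{atoms}(A)\subsetneq\mathit{atoms}(B)$. A CQAP is free-dominant (input-dominant) if whenever $A$ is free (input) and $B$ dominates $A$, then $B$ is free (input). It is hierarchical if for all variables $A,B$: $\mathit{atoms}(A)\subseteq\mathit{atoms}(B)$, or $\mathit{atoms}(B)\subseteq\mathit{atoms}(A)$, or $\mathit{atoms}(A)\cap\mathit{atoms}(B)=\emptyset$. $\mathrm{CQAP}_0$ is the class of CQAPs whose fracture is hierarchical, free-dominant and input-dominant. Variable orders. A variable order (VO) $\omega$ for a CQAP is a rooted forest with exactly one node per variable such that the variables of each atom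 lie on a common root-to-leaf path; $\mathit{dep}_\omega(X)$ is the set of ancestors $Y$ of $X$ that occur in a common atom with some variable of the subtree rooted at $X$. The extended VO adds leaves: each atom becomes a child of its lowest variable; then, processing variables bottom-up, at each variable $X$ with $\mathcal S=\{X\}\cup\mathit{dep}_\omega(X)$ and $\mathcal R$ the set of atoms below $X$, consider candidate indicator atoms $I_{\mathcal Z}R(\mathcal Z)$ for atoms $R(\mathcal Y)$ not in $\mathcal R$ with $\mathcal Z=\mathcal Y\cap\mathcal S\neq\emptyset$; run the GYO reduction (repeatedly delete a vertex occurring in only one hyperedge and a hyperedge contained in another) on the hypergraph whose hyperedges are the schemas of the candidates and of $\mathcal R$, and add as children of $X$ those candidates whose hyperedges survive in the fixpoint. All VOs are extended. A VO is access-top if no bound variable is an ancestor of a free variable and no output variable is an ancestor of an input variable. Widths. For a VO $\omega$ and variable $X$, $\omega_X$ is the subtree rooted at $X$ and $Q_X$ the join of all atoms and indicator atoms at the leaves of $\omega_X$. For a variable set $\mathcal F$, $\rho^*_{Q_X}(\mathcal F)$ is the minimum of $\sum_e\lambda_e$ over $\lambda_e\in[0,1]$ indexed by atoms $e$ of $Q_X$ subject to $\sum_{e\ni Y}\lambda_e\ge1$ for all $Y\in\mathcal F$ (so $\rho^*(\emptyset)=0$). $\mathsf w(\omega)=\max_X\rho^*_{Q_X}(\{X\}\cup\mathit{dep}_\omega(X))$ and $\delta(\omega)=\max_X\max_{R(\mathcal Y)}\rho^*_{Q_X}((\{X\}\cup\mathit{dep}_\omega(X))\setminus\mathcal Y)$,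 the inner maximum over atoms and indicator atoms $R(\mathcal Y)$ at leaves of $\omega_X$. For a CQAP $Q$, $(\delta(Q),\mathsf w(Q))$ is the lexicographically smallest pair $(\delta(\omega),\mathsf w(\omega))$ (first minimise $\delta$, then $\mathsf w$) over all access-top VOs $\omega$ of $Q_\dagger$. *)

theory Defs
  imports Complex_Main
begin

text \<open>A CQAP is given by the list of its atoms (each atom represented by its schema,
  the finite set of variables it contains; relation symbols play no role in any notion
  used here), its input variables and its output variables.\<close>

record 'v cqap =
  atoms :: "'v set list"
  inp   :: "'v set"
  outp  :: "'v set"

definition qvars :: "'v cqap \<Rightarrow> 'v set" where
  "qvars Q = \<Union> (set (atoms Q))"

definition free_vars :: "'v cqap \<Rightarrow> 'v set" where
  "free_vars Q = inp Q \<union> outp Q"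

definition bound_vars :: "'v cqap \<Rightarrow> 'v set" where
  "bound_vars Q = qvars Q - free_vars Q"

definition wf_cqap :: "'v cqap \<Rightarrow> bool" where
  "wf_cqap Q \<longleftrightarrow> (\<forall>X \<in> set (atoms Q). finite X)
      \<and> inp Q \<union> outp Q \<subseteq> qvars Q \<and> inp Q \<inter> outp Q = {}"

definition atoms_of :: "'v cqap \<Rightarrow> 'v \<Rightarrow> nat set" where
  "atoms_of Q A = {i. i < length (atoms Q) \<and> A \<in> atoms Q ! i}"

definition dominates :: "'v cqap \<Rightarrow> 'v \<Rightarrow> 'v \<Rightarrow> bool" where
  "dominates Q B A \<longleftrightarrow> atoms_of Q A \<subset> atoms_of Q B"

definition free_dominant :: "'v cqap \<Rightarrow> bool" where
  "free_dominant Q \<longleftrightarrow> (\<forall>A \<in> qvars Q. \<forall>B \<in> qvars Q.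
      A \<in> free_vars Q \<and> dominates Q B A \<longrightarrow> B \<in> free_vars Q)"

definition input_dominant :: "'v cqap \<Rightarrow> bool" where
  "input_dominant Q \<longleftrightarrow> (\<forall>A \<in> qvars Q. \<forall>B \<in> qvars Q.
      A \<in> inp Q \<and> dominates Q B A \<longrightarrow> B \<in> inp Q)"

definition hierarchical :: "'v cqap \<Rightarrow> bool" where
  "hierarchical Q \<longleftrightarrow> (\<forall>A \<in> qvars Q. \<forall>B \<in> qvars Q.
      atoms_of Q A \<subseteq> atoms_of Q B \<or> atoms_of Q B \<subseteq> atoms_of Q A
      \<or> atoms_of Q A \<inter> atoms_of Q B = {})"

text \<open>After replacing every occurrence of an input variable by a distinct fresh variable,
  two atoms are adjacent in the hypergraph iff they share a non-input variable
  (fresh variables occur in exactly one atom).\<close>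

definition frac_adj :: "'v cqap \<Rightarrow> nat \<Rightarrow> nat \<Rightarrow> bool" where
  "frac_adj Q i j \<longleftrightarrow> i < length (atoms Q) \<and> j < length (atoms Q)
      \<and> (\<exists>v. v \<notin> inp Q \<and> v \<in> atoms Q ! i \<and> v \<in> atoms Q ! j)"

definition frac_comp :: "'v cqap \<Rightarrow> nat \<Rightarrow> nat set" where
  "frac_comp Q i = {j. (i, j) \<in> {(a, b). frac_adj Q a b}\<^sup>*}"

definition frac_rep :: "'v cqap \<Rightarrow> nat \<Rightarrow> nat" where
  "frac_rep Q i = (LEAST j. j \<in> frac_comp Q i)"

text \<open>Variables of the fracture: non-input variables v become (v, None); an input
  variable x occurring in the component named c becomes the fresh input variable (x, Some c).\<close>

definition frac_atom :: "'v cqap \<Rightarrow> nat \<Rightarrow> ('v \<times> nat option) set" where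
  "frac_atom Q i = (\<lambda>v. (v, None)) ` (atoms Q ! i - inp Q)
      \<union> (\<lambda>x. (x, Some (frac_rep Q i))) ` (atoms Q ! i \<inter> inp Q)"

definition fracture :: "'v cqap \<Rightarrow> ('v \<times> nat option) cqap" where
  "fracture Q = \<lparr> atoms = map (frac_atom Q) [0..<length (atoms Q)],
      inp = {(x, Some (frac_rep Q i)) | x i. i < length (atoms Q) \<and> x \<in> atoms Q ! i \<inter> inp Q},
      outp = (\<lambda>v. (v, None)) ` outp Q \<rparr>"

definition CQAP0 :: "'v cqap \<Rightarrow> bool" where
  "CQAP0 Q \<longleftrightarrow> hierarchical (fracture Q) \<and> free_dominant (fracture Q)
      \<and> input_dominant (fracture Q)"

text \<open>A variable order is a rooted forest on the variables, given by a parent map.\<close>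

type_synonym 'v vo = "'v \<Rightarrow> 'v option"

definition par_rel :: "'v vo \<Rightarrow> ('v \<times> 'v) set" where
  "par_rel \<omega> = {(x, y). \<omega> x = Some y}"

text \<open>anc \<omega> x y: y is a (strict) ancestor of x.\<close>
definition anc :: "'v vo \<Rightarrow> 'v \<Rightarrow> 'v \<Rightarrow> bool" where
  "anc \<omega> x y \<longleftrightarrow> (x, y) \<in> (par_rel \<omega>)\<^sup>+"

definition subtree :: "'v vo \<Rightarrow> 'v \<Rightarrow> 'v set" where
  "subtree \<omega> X = insert X {Z. anc \<omega> Z X}"

text \<open>The variables of each atom lie on a common root-to-leaf path, i.e. they are
  pairwise comparable w.r.t. the ancestor relation.\<close>
definition is_vo :: "'v cqap \<Rightarrow> 'v vo \<Rightarrow> bool" where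
  "is_vo Q \<omega> \<longleftrightarrow> (\<forall>x. x \<notin> qvars Q \<longrightarrow> \<omega> x = None)
      \<and> (\<forall>x y. \<omega> x = Some y \<longrightarrow> y \<in> qvars Q)
      \<and> (\<forall>x. \<not> anc \<omega> x x)
      \<and> (\<forall>A \<in> set (atoms Q). \<forall>x \<in> A. \<forall>y \<in> A. x = y \<or> anc \<omega> x y \<or> anc \<omega> y x)"

definition dep :: "'v cqap \<Rightarrow> 'v vo \<Rightarrow> 'v \<Rightarrow> 'v set" where
  "dep Q \<omega> X = {Y. anc \<omega> X Y \<and> (\<exists>A \<in> set (atoms Q). Y \<in> A \<and> (\<exists>Z \<in> subtree \<omega> X. Z \<in> A))}"

definition Svars :: "'v cqap \<Rightarrow> 'v vo \<Rightarrow> 'v \<Rightarrow> 'v set" where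
  "Svars Q \<omega> X = insert X (dep Q \<omega> X)"

text \<open>Leaves of an extended VO: atoms (by index) and indicator atoms
  Ind X i = the indicator atom I_Z R_i with Z = schema(R_i) \<inter> S_X added as a child of X.\<close>

datatype 'v leaf = Atm nat | Ind 'v nat

fun leaf_sch :: "'v cqap \<Rightarrow> 'v vo \<Rightarrow> 'v leaf \<Rightarrow> 'v set" where
  "leaf_sch Q \<omega> (Atm i) = atoms Q ! i"
| "leaf_sch Q \<omega> (Ind X i) = atoms Q ! i \<inter> Svars Q \<omega> X"

text \<open>Atom i is a child of its lowest variable X.\<close>
definition atom_at :: "'v cqap \<Rightarrow> 'v vo \<Rightarrow> nat \<Rightarrow> 'v \<Rightarrow> bool" where
  "atom_at Q \<omega> i X \<longleftrightarrow> i < length (atoms Q) \<and> X \<in> atoms Q ! i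
      \<and> (\<forall>Y \<in> atoms Q ! i. Y = X \<or> anc \<omega> X Y)"

text \<open>ind X: the indices i of the atoms whose indicator atoms are children of X.\<close>
definition leaves_below :: "'v cqap \<Rightarrow> 'v vo \<Rightarrow> ('v \<Rightarrow> nat set) \<Rightarrow> 'v \<Rightarrow> 'v leaf set" where
  "leaves_below Q \<omega> ind X = {Atm i | i. \<exists>Z \<in> subtree \<omega> X. atom_at Q \<omega> i Z}
      \<union> {Ind Z i | Z i. Z \<in> subtree \<omega> X \<and> i \<in> ind Z}"

text \<open>The set R of (atom and indicator) leaves below X at the time X is processed
  (bottom-up): everything in the subtree except the indicators of X itself.\<close>
definition R_below :: "'v cqap \<Rightarrow> 'v vo \<Rightarrow> ('v \<Rightarrow> nat set) \<Rightarrow> 'v \<Rightarrow> 'v leaf set" where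
  "R_below Q \<omega> ind X = {Atm i | i. \<exists>Z \<in> subtree \<omega> X. atom_at Q \<omega> i Z}
      \<union> {Ind Z i | Z i. anc \<omega> Z X \<and> i \<in> ind Z}"

definition candidates :: "'v cqap \<Rightarrow> 'v vo \<Rightarrow> ('v \<Rightarrow> nat set) \<Rightarrow> 'v \<Rightarrow> nat set" where
  "candidates Q \<omega> ind X = {i. i < length (atoms Q) \<and> Atm i \<notin> R_below Q \<omega> ind X
      \<and> atoms Q ! i \<inter> Svars Q \<omega> X \<noteq> {}}"

inductive gyo_step :: "('l \<Rightarrow> 'v set option) \<Rightarrow> ('l \<Rightarrow> 'v set option) \<Rightarrow> bool" where
  vdel: "H e = Some E \<Longrightarrow> v \<in> E \<Longrightarrow> (\<forall>e' E'. e' \<noteq> e \<longrightarrow> H e' = Some E' \<longrightarrow> v \<notin> E')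
          \<Longrightarrow> gyo_step H (H(e := Some (E - {v})))"
| edel: "H e = Some E \<Longrightarrow> H e' = Some E' \<Longrightarrow> e \<noteq> e' \<Longrightarrow> E \<subseteq> E'
          \<Longrightarrow> gyo_step H (H(e := None))"

definition gyo_fix :: "('l \<Rightarrow> 'v set option) \<Rightarrow> ('l \<Rightarrow> 'v set option) \<Rightarrow> bool" where
  "gyo_fix H H' \<longleftrightarrow> gyo_step\<^sup>*\<^sup>* H H' \<and> \<not> (\<exists>H''. gyo_step H' H'')"

definition gyo_hypergraph :: "'v cqap \<Rightarrow> 'v vo \<Rightarrow> ('v \<Rightarrow> nat set) \<Rightarrow> 'v \<Rightarrow> 'v leaf \<Rightarrow> 'v set option" where
  "gyo_hypergraph Q \<omega> ind X l =
     (if l \<in> R_below Q \<omega> ind X \<union> Ind X ` candidates Q \<omega> ind X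
      then Some (leaf_sch Q \<omega> l) else None)"

definition valid_ind :: "'v cqap \<Rightarrow> 'v vo \<Rightarrow> ('v \<Rightarrow> nat set) \<Rightarrow> bool" where
  "valid_ind Q \<omega> ind \<longleftrightarrow> (\<forall>X. X \<notin> qvars Q \<longrightarrow> ind X = {})
     \<and> (\<forall>X \<in> qvars Q. \<exists>H'. gyo_fix (gyo_hypergraph Q \<omega> ind X) H'
            \<and> ind X = {i \<in> candidates Q \<omega> ind X. H' (Ind X i) \<noteq> None})"

definition is_ext_vo :: "'v cqap \<Rightarrow> 'v vo \<Rightarrow> ('v \<Rightarrow> nat set) \<Rightarrow> bool" where
  "is_ext_vo Q \<omega> ind \<longleftrightarrow> is_vo Q \<omega> \<and> valid_ind Q \<omega> ind"

definition access_top :: "'v cqap \<Rightarrow> 'v vo \<Rightarrow> bool" where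
  "access_top Q \<omega> \<longleftrightarrow> (\<forall>x y. anc \<omega> x y \<longrightarrow>
      \<not> (y \<in> bound_vars Q \<and> x \<in> free_vars Q) \<and> \<not> (y \<in> outp Q \<and> x \<in> inp Q))"

definition rho_star :: "'l set \<Rightarrow> ('l \<Rightarrow> 'v set) \<Rightarrow> 'v set \<Rightarrow> real" where
  "rho_star E sch F = Inf {(\<Sum>e\<in>E. lam e) | lam.
      (\<forall>e\<in>E. 0 \<le> lam e \<and> lam e \<le> 1) \<and> (\<forall>Y\<in>F. (\<Sum>e\<in>{e\<in>E. Y \<in> sch e}. lam e) \<ge> 1)}"

definition static_w :: "'v cqap \<Rightarrow> 'v vo \<Rightarrow> ('v \<Rightarrow> nat set) \<Rightarrow> real" where
  "static_w Q \<omega> ind = Max ((\<lambda>X. rho_star (leaves_below Q \<omega> ind X) (leaf_sch Q \<omega>) (Svars Q \<omega> X))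
      ` qvars Q)"

definition dyn_delta :: "'v cqap \<Rightarrow> 'v vo \<Rightarrow> ('v \<Rightarrow> nat set) \<Rightarrow> real" where
  "dyn_delta Q \<omega> ind = Max ((\<lambda>(X, l). rho_star (leaves_below Q \<omega> ind X) (leaf_sch Q \<omega>)
        (Svars Q \<omega> X - leaf_sch Q \<omega> l))
      ` {(X, l). X \<in> qvars Q \<and> l \<in> leaves_below Q \<omega> ind X})"

definition width_pairs :: "'v cqap \<Rightarrow> (real \<times> real) set" where
  "width_pairs Q = {(dyn_delta (fracture Q) \<omega> ind, static_w (fracture Q) \<omega> ind) | \<omega> ind.
      is_ext_vo (fracture Q) \<omega> ind \<and> access_top (fracture Q) \<omega>}"

text \<open>(delta(Q), w(Q)): lexicographically smallest pair.\<close>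
definition cqap_delta :: "'v cqap \<Rightarrow> real" where
  "cqap_delta Q = Min (fst ` width_pairs Q)"

definition cqap_w :: "'v cqap \<Rightarrow> real" where
  "cqap_w Q = Min {w. (cqap_delta Q, w) \<in> width_pairs Q}"

end

theory Submission
  imports Defs
begin

lemma rho_lower:
  assumes fin: "finite E" and lam: "\<forall>e\<in>E. 0 \<le> lam e \<and> lam e \<le> (1::real)"
    and c: "\<forall>Y\<in>F. (\<Sum>e\<in>{e\<in>E. Y \<in> sch e}. lam e) \<ge> 1" and Y: "Y \<in> F"
  shows "(\<Sum>e\<in>E. lam e) \<ge> 1"
proof -
  have "(\<Sum>e\<in>{e\<in>E. Y \<in> sch e}. lam e) \<le> (\<Sum>e\<in>E. lam e)"
    by (rule sum_mono2) (use fin lam in auto)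
  with c Y show ?thesis by fastforce
qed

lemma rho_feasible1:
  assumes fin: "finite E" and cov: "\<forall>Y\<in>F. \<exists>e\<in>E. Y \<in> sch e"
  shows "(\<Sum>e\<in>E. (\<lambda>_. 1::real) e) \<in> {(\<Sum>e\<in>E. lam e) | lam.
      (\<forall>e\<in>E. 0 \<le> lam e \<and> lam e \<le> 1) \<and> (\<forall>Y\<in>F. (\<Sum>e\<in>{e\<in>E. Y \<in> sch e}. lam e) \<ge> (1::real))}"
proof -
  have "\<forall>Y\<in>F. (\<Sum>e\<in>{e\<in>E. Y \<in> sch e}. (\<lambda>_. 1::real) e) \<ge> 1"
  proof
    fix Y assume "Y \<in> F"
    then obtain e where "e \<in> E" "Y \<in> sch e" using cov by blast
    hence "{e\<in>E. Y \<in> sch e} \<noteq> {}" by blast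
    moreover have "finite {e\<in>E. Y \<in> sch e}" using fin by simp
    ultimately have "card {e\<in>E. Y \<in> sch e} \<ge> 1"
      by (simp add: Suc_leI card_gt_0_iff)
    thus "(\<Sum>e\<in>{e\<in>E. Y \<in> sch e}. (\<lambda>_. 1::real) e) \<ge> 1" by simp
  qed
  thus ?thesis by (intro CollectI exI[of _ "\<lambda>_. 1"]) auto
qed

lemma mem_ne: "x \<in> A \<Longrightarrow> A \<noteq> {}" by auto

lemma rho_ge0:
  assumes fin: "finite E" and cov: "\<forall>Y\<in>F. \<exists>e\<in>E. Y \<in> sch e"
  shows "rho_star E sch F \<ge> 0"
  unfolding rho_star_def
proof (rule cInf_greatest)
  show "{(\<Sum>e\<in>E. lam e) | lam.
      (\<forall>e\<in>E. 0 \<le> lam e \<and> lam e \<le> 1) \<and> (\<forall>Y\<in>F. (\<Sum>e\<in>{e\<in>E. Y \<in> sch e}. lam e) \<ge> (1::real))} \<noteq> {}"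
    using rho_feasible1[OF fin cov] by (rule mem_ne)
next
  fix x assume "x \<in> {(\<Sum>e\<in>E. lam e) | lam.
      (\<forall>e\<in>E. 0 \<le> lam e \<and> lam e \<le> 1) \<and> (\<forall>Y\<in>F. (\<Sum>e\<in>{e\<in>E. Y \<in> sch e}. lam e) \<ge> (1::real))}"
  then obtain lam where "x = (\<Sum>e\<in>E. lam e)" "\<forall>e\<in>E. 0 \<le> lam e \<and> lam e \<le> 1" by blast
  then show "0 \<le> x" by (simp add: sum_nonneg)
qed

lemma rho_ge1:
  assumes fin: "finite E" and cov: "\<forall>Y\<in>F. \<exists>e\<in>E. Y \<in> sch e" and ne: "F \<noteq> {}"
  shows "rho_star E sch F \<ge> 1"
  unfolding rho_star_def
proof (rule cInf_greatest)
  show "{(\<Sum>e\<in>E. lam e) | lam.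
      (\<forall>e\<in>E. 0 \<le> lam e \<and> lam e \<le> 1) \<and> (\<forall>Y\<in>F. (\<Sum>e\<in>{e\<in>E. Y \<in> sch e}. lam e) \<ge> (1::real))} \<noteq> {}"
    using rho_feasible1[OF fin cov] by (rule mem_ne)
next
  fix x assume "x \<in> {(\<Sum>e\<in>E. lam e) | lam.
      (\<forall>e\<in>E. 0 \<le> lam e \<and> lam e \<le> 1) \<and> (\<forall>Y\<in>F. (\<Sum>e\<in>{e\<in>E. Y \<in> sch e}. lam e) \<ge> (1::real))}"
  then obtain lam where x: "x = (\<Sum>e\<in>E. lam e)" and l: "\<forall>e\<in>E. 0 \<le> lam e \<and> lam e \<le> 1"
     and c: "\<forall>Y\<in>F. (\<Sum>e\<in>{e\<in>E. Y \<in> sch e}. lam e) \<ge> 1" by blast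
  obtain Y where "Y \<in> F" using ne by blast
  from rho_lower[OF fin l c this] show "1 \<le> x" unfolding x .
qed

lemma rho_0:
  assumes fin: "finite E"
  shows "rho_star E sch {} = 0"
  unfolding rho_star_def
proof (rule cInf_eq_minimum)
  show "0 \<in> {(\<Sum>e\<in>E. lam e) | lam.
      (\<forall>e\<in>E. 0 \<le> lam e \<and> lam e \<le> 1) \<and> (\<forall>Y\<in>{}. (\<Sum>e\<in>{e\<in>E. Y \<in> sch e}. lam e) \<ge> (1::real))}"
    by (rule CollectI, rule exI[of _ "\<lambda>_. 0"], simp)
next
  fix x assume "x \<in> {(\<Sum>e\<in>E. lam e) | lam.
      (\<forall>e\<in>E. 0 \<le> lam e \<and> lam e \<le> 1) \<and> (\<forall>Y\<in>{}. (\<Sum>e\<in>{e\<in>E. Y \<in> sch e}. lam e) \<ge> (1::real))}"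
  then obtain lam where "x = (\<Sum>e\<in>E. lam e)" "\<forall>e\<in>E. 0 \<le> lam e \<and> lam e \<le> 1" by blast
  then show "0 \<le> x" by (simp add: sum_nonneg)
qed

lemma rho_1:
  assumes fin: "finite E" and e0: "e0 \<in> E" and sub: "F \<subseteq> sch e0" and ne: "F \<noteq> {}"
  shows "rho_star E sch F = 1"
  unfolding rho_star_def
proof (rule cInf_eq_minimum)
  define lam0 where "lam0 = (\<lambda>e. if e = e0 then 1 else (0::real))"
  have s: "(\<Sum>e\<in>E. lam0 e) = 1" using fin e0 unfolding lam0_def by (simp add: sum.delta)
  have b: "\<forall>e\<in>E. 0 \<le> lam0 e \<and> lam0 e \<le> 1" unfolding lam0_def by simp
  have c: "\<forall>Y\<in>F. (\<Sum>e\<in>{e\<in>E. Y \<in> sch e}. lam0 e) \<ge> 1"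
  proof
    fix Y assume "Y \<in> F"
    hence "e0 \<in> {e\<in>E. Y \<in> sch e}" using e0 sub by blast
    moreover have "finite {e\<in>E. Y \<in> sch e}" using fin by simp
    ultimately have "(\<Sum>e\<in>{e\<in>E. Y \<in> sch e}. lam0 e) = 1" unfolding lam0_def by (simp only: sum.delta) simp
    thus "(\<Sum>e\<in>{e\<in>E. Y \<in> sch e}. lam0 e) \<ge> 1" by simp
  qed
  have "(\<Sum>e\<in>E. lam0 e) \<in> {(\<Sum>e\<in>E. lam e) | lam.
      (\<forall>e\<in>E. 0 \<le> lam e \<and> lam e \<le> 1) \<and> (\<forall>Y\<in>F. (\<Sum>e\<in>{e\<in>E. Y \<in> sch e}. lam e) \<ge> (1::real))}"
    using b c by blast
  then show "1 \<in> {(\<Sum>e\<in>E. lam e) | lam.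
      (\<forall>e\<in>E. 0 \<le> lam e \<and> lam e \<le> 1) \<and> (\<forall>Y\<in>F. (\<Sum>e\<in>{e\<in>E. Y \<in> sch e}. lam e) \<ge> (1::real))}"
    unfolding s .
next
  fix x assume "x \<in> {(\<Sum>e\<in>E. lam e) | lam.
      (\<forall>e\<in>E. 0 \<le> lam e \<and> lam e \<le> 1) \<and> (\<forall>Y\<in>F. (\<Sum>e\<in>{e\<in>E. Y \<in> sch e}. lam e) \<ge> (1::real))}"
  then obtain lam where x: "x = (\<Sum>e\<in>E. lam e)" and l: "\<forall>e\<in>E. 0 \<le> lam e \<and> lam e \<le> 1"
     and c: "\<forall>Y\<in>F. (\<Sum>e\<in>{e\<in>E. Y \<in> sch e}. lam e) \<ge> 1" by blast
  obtain Y where "Y \<in> F" using ne by blast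
  from rho_lower[OF fin l c this] show "1 \<le> x" unfolding x .
qed

lemma lowest_exists:
  assumes "finite S" "S \<noteq> {}" "\<And>x y z. R x y \<Longrightarrow> R y z \<Longrightarrow> R x z"
    "\<forall>x\<in>S. \<forall>y\<in>S. x = y \<or> R x y \<or> R y x"
  shows "\<exists>p\<in>S. \<forall>z\<in>S. z = p \<or> R p z"
  using assms(1,2,4)
proof (induction S rule: finite_ne_induct)
  case (singleton x) then show ?case by simp
next
  case (insert x S)
  then obtain p where p: "p \<in> S" "\<forall>z\<in>S. z = p \<or> R p z" by auto
  have "x = p \<or> R x p \<or> R p x" using insert.prems p(1) by simp
  then show ?case
  proof (elim disjE)
    assume "x = p" then show ?thesis using p by simp
  next
    assume "R x p"
    have "\<forall>z\<in>insert x S. z = x \<or> R x z"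
    proof
      fix z assume z: "z \<in> insert x S"
      show "z = x \<or> R x z"
      proof (cases "z = x")
        case False then have "z \<in> S" using z by simp
        then have "z = p \<or> R p z" using p by simp
        then show ?thesis using \<open>R x p\<close> assms(3)[of x p z] by auto
      qed simp
    qed
    then show ?thesis by blast
  next
    assume "R p x"
    then have "\<forall>z\<in>insert x S. z = p \<or> R p z" using p by blast
    then show ?thesis using p(1) by blast
  qed
qed

section \<open>Generic lemmas about variable orders\<close>

lemma in_qvars_atom: "x \<in> qvars P \<Longrightarrow> \<exists>i<length (atoms P). x \<in> atoms P ! i"
  unfolding qvars_def by (auto simp: in_set_conv_nth)

lemma anc_trans: "anc \<omega> x y \<Longrightarrow> anc \<omega> y z \<Longrightarrow> anc \<omega> x z"
  unfolding anc_def by (rule trancl_trans)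

lemma lowest_var:
  assumes fin: "\<forall>A\<in>set (atoms P). finite A" and vo: "is_vo P \<omega>"
    and i: "i < length (atoms P)" and ne: "atoms P ! i \<noteq> {}"
  shows "\<exists>W. atom_at P \<omega> i W"
proof -
  have A: "atoms P ! i \<in> set (atoms P)" using i by simp
  have cmp: "\<forall>x\<in>atoms P ! i. \<forall>y\<in>atoms P ! i. x = y \<or> anc \<omega> x y \<or> anc \<omega> y x"
    using vo A unfolding is_vo_def by metis
  have "\<exists>p\<in>atoms P ! i. \<forall>z\<in>atoms P ! i. z = p \<or> anc \<omega> p z"
    by (rule lowest_exists[OF _ ne _ cmp]) (use fin A in simp, erule (1) anc_trans)
  then obtain p where "p \<in> atoms P ! i" "\<forall>z\<in>atoms P ! i. z = p \<or> anc \<omega> p z" by blast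
  then have "atom_at P \<omega> i p" unfolding atom_at_def using i by simp
  thus ?thesis by blast
qed

lemma coverage:
  assumes fin: "\<forall>A\<in>set (atoms P). finite A" and vo: "is_vo P \<omega>"
    and X: "X \<in> qvars P" and Y: "Y \<in> Svars P \<omega> X"
  shows "\<exists>i Z. Z \<in> subtree \<omega> X \<and> atom_at P \<omega> i Z \<and> Y \<in> atoms P ! i"
proof -
  have "\<exists>i Z. i < length (atoms P) \<and> Y \<in> atoms P ! i \<and> Z \<in> atoms P ! i \<and> (Z = X \<or> anc \<omega> Z X)"
  proof (cases "Y = X")
    case True
    then show ?thesis using in_qvars_atom[OF X] by blast
  next
    case False
    then have "Y \<in> dep P \<omega> X" using Y unfolding Svars_def by simp
    then obtain A Z where A: "A \<in> set (atoms P)" "Y \<in> A" "Z \<in> subtree \<omega> X" "Z \<in> A"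
      unfolding dep_def by blast
    obtain i where i: "i < length (atoms P)" "atoms P ! i = A" using A(1) by (auto simp: in_set_conv_nth)
    have "Z = X \<or> anc \<omega> Z X" using A(3) unfolding subtree_def by simp
    then show ?thesis using i A(2,4) by blast
  qed
  then obtain i Z where i: "i < length (atoms P)" "Y \<in> atoms P ! i" "Z \<in> atoms P ! i"
      "Z = X \<or> anc \<omega> Z X" by blast
  have ne: "atoms P ! i \<noteq> {}" using i(2) by blast
  obtain W where W: "atom_at P \<omega> i W" using lowest_var[OF fin vo i(1) ne] by blast
  have "Z = W \<or> anc \<omega> W Z" using W i(3) unfolding atom_at_def by blast
  hence "W = X \<or> anc \<omega> W X" using i(4) anc_trans[of \<omega> W Z X] by auto
  hence "W \<in> subtree \<omega> X" unfolding subtree_def by simp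
  thus ?thesis using W i(2) by blast
qed

lemma leaves_sub:
  assumes vi: "valid_ind P \<omega> ind"
  shows "leaves_below P \<omega> ind X \<subseteq> Atm ` {..<length (atoms P)}
     \<union> (\<lambda>(Z,i). Ind Z i) ` (qvars P \<times> {..<length (atoms P)})"
proof
  fix l assume l: "l \<in> leaves_below P \<omega> ind X"
  show "l \<in> Atm ` {..<length (atoms P)} \<union> (\<lambda>(Z,i). Ind Z i) ` (qvars P \<times> {..<length (atoms P)})"
  proof (cases l)
    case (Atm i)
    then show ?thesis using l unfolding leaves_below_def atom_at_def by auto
  next
    case (Ind Z i)
    then have iZ: "i \<in> ind Z" using l unfolding leaves_below_def by auto
    then have Z: "Z \<in> qvars P" using vi unfolding valid_ind_def by auto
    then have "i \<in> candidates P \<omega> ind Z" using vi iZ unfolding valid_ind_def by blast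
    then have "i < length (atoms P)" unfolding candidates_def by auto
    then show ?thesis using Z Ind by force
  qed
qed

lemma leaves_fin:
  assumes fin: "\<forall>A\<in>set (atoms P). finite A" and vi: "valid_ind P \<omega> ind"
  shows "finite (leaves_below P \<omega> ind X)"
proof -
  have "finite (qvars P)" using fin unfolding qvars_def by auto
  then show ?thesis using finite_subset[OF leaves_sub[OF vi]] by auto
qed

lemma leaf_cover:
  assumes fin: "\<forall>A\<in>set (atoms P). finite A" and vo: "is_vo P \<omega>"
    and X: "X \<in> qvars P"
  shows "\<forall>Y\<in>Svars P \<omega> X. \<exists>e\<in>leaves_below P \<omega> ind X. Y \<in> leaf_sch P \<omega> e"
proof
  fix Y assume "Y \<in> Svars P \<omega> X"
  then obtain i Z where "Z \<in> subtree \<omega> X" "atom_at P \<omega> i Z" "Y \<in> atoms P ! i"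
    using coverage[OF fin vo X] by blast
  then show "\<exists>e\<in>leaves_below P \<omega> ind X. Y \<in> leaf_sch P \<omega> e"
    by (intro bexI[of _ "Atm i"]) (auto simp: leaves_below_def)
qed

lemma lower_bounds:
  assumes fin: "\<forall>A\<in>set (atoms P). finite A" and ne: "qvars P \<noteq> {}"
    and ext: "is_ext_vo P \<omega> ind"
  shows "dyn_delta P \<omega> ind \<ge> 0 \<and> static_w P \<omega> ind \<ge> 1"
proof -
  have vo: "is_vo P \<omega>" and vi: "valid_ind P \<omega> ind" using ext unfolding is_ext_vo_def by auto
  have finV: "finite (qvars P)" using fin unfolding qvars_def by auto
  obtain X where X: "X \<in> qvars P" using ne by blast
  have cov: "\<forall>Y\<in>Svars P \<omega> X. \<exists>e\<in>leaves_below P \<omega> ind X. Y \<in> leaf_sch P \<omega> e"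
    using leaf_cover[OF fin vo X] .
  have g1: "rho_star (leaves_below P \<omega> ind X) (leaf_sch P \<omega>) (Svars P \<omega> X) \<ge> 1"
    by (rule rho_ge1[OF leaves_fin[OF fin vi] cov]) (simp add: Svars_def)
  have s: "static_w P \<omega> ind \<ge> 1"
    unfolding static_w_def
    apply (rule order_trans[OF g1])
    apply (rule Max_ge) using finV X by auto
  obtain l where l: "l \<in> leaves_below P \<omega> ind X" using cov by (auto simp: Svars_def)
  let ?S = "{(X, l). X \<in> qvars P \<and> l \<in> leaves_below P \<omega> ind X}"
  have Seq: "?S = Sigma (qvars P) (\<lambda>X. leaves_below P \<omega> ind X)" by auto
  have finS: "finite ?S" unfolding Seq using finV leaves_fin[OF fin vi] by auto
  have g0: "rho_star (leaves_below P \<omega> ind X) (leaf_sch P \<omega>) (Svars P \<omega> X - leaf_sch P \<omega> l) \<ge> 0"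
    by (rule rho_ge0[OF leaves_fin[OF fin vi]]) (use cov in blast)
  have d: "dyn_delta P \<omega> ind \<ge> 0"
    unfolding dyn_delta_def
    apply (rule order_trans[OF g0])
    apply (rule Max_ge) using finS X l by auto
  show ?thesis using s d by simp
qed

lemma pairs_fin:
  assumes fin: "\<forall>A\<in>set (atoms P). finite A"
  shows "finite {(\<omega>, ind). is_ext_vo P \<omega> ind \<and> access_top P \<omega>}"
proof -
  have finV: "finite (qvars P)" using fin unfolding qvars_def by auto
  let ?O = "{\<omega>. \<forall>x. (x \<in> qvars P \<longrightarrow> \<omega> x \<in> insert None (Some ` qvars P)) \<and> (x \<notin> qvars P \<longrightarrow> \<omega> x = None)}"
  let ?I = "{ind. \<forall>x. (x \<in> qvars P \<longrightarrow> ind x \<in> Pow {..<length (atoms P)}) \<and> (x \<notin> qvars P \<longrightarrow> ind x = {})}"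
  have f1: "finite ?O" by (rule finite_set_of_finite_funs) (use finV in auto)
  have f2: "finite ?I" by (rule finite_set_of_finite_funs) (use finV in auto)
  have "{(\<omega>, ind). is_ext_vo P \<omega> ind \<and> access_top P \<omega>} \<subseteq> ?O \<times> ?I"
  proof clarify
    fix \<omega> ind assume e: "is_ext_vo P \<omega> ind"
    have vo: "is_vo P \<omega>" and vi: "valid_ind P \<omega> ind" using e unfolding is_ext_vo_def by auto
    have "\<omega> \<in> ?O"
    proof (rule CollectI, intro allI conjI impI)
      fix x assume "x \<in> qvars P"
      show "\<omega> x \<in> insert None (Some ` qvars P)"
        using vo unfolding is_vo_def by (cases "\<omega> x") auto
    next
      fix x assume "x \<notin> qvars P"
      then show "\<omega> x = None" using vo unfolding is_vo_def by auto
    qed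
    moreover have "ind \<in> ?I"
    proof (rule CollectI, intro allI conjI impI PowI subsetI)
      fix x i assume "x \<in> qvars P" "i \<in> ind x"
      then have "i \<in> candidates P \<omega> ind x" using vi unfolding valid_ind_def by blast
      then show "i \<in> {..<length (atoms P)}" unfolding candidates_def by auto
    next
      fix x assume "x \<notin> qvars P" then show "ind x = {}" using vi unfolding valid_ind_def by auto
    qed
    ultimately show "\<omega> \<in> ?O \<and> ind \<in> ?I" by blast
  qed
  then show ?thesis using finite_subset f1 f2 by blast
qed

section \<open>GYO\<close>

definition mu :: "('l \<Rightarrow> 'v set option) \<Rightarrow> nat" where
  "mu H = (\<Sum>l\<in>dom H. card (the (H l)) + 1)"

lemma gyo_step_props:
  assumes st: "gyo_step H H2" and fd: "finite (dom H)" and fe: "\<forall>l E. H l = Some E \<longrightarrow> finite E"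
  shows "finite (dom H2) \<and> (\<forall>l E. H2 l = Some E \<longrightarrow> finite E)
     \<and> (\<forall>l. H l = None \<longrightarrow> H2 l = None) \<and> mu H2 < mu H"
  using st
proof cases
  case (vdel e E v)
  have eD: "e \<in> dom H" using vdel by blast
  have finE: "finite E" using fe vdel by blast
  have d: "dom H2 = dom H" using vdel eD by auto
  have r: "(\<Sum>l\<in>dom H - {e}. card (the (H2 l)) + 1) = (\<Sum>l\<in>dom H - {e}. card (the (H l)) + 1)"
    by (rule sum.cong) (use vdel in auto)
  have m1: "mu H = (card E + 1) + (\<Sum>l\<in>dom H - {e}. card (the (H l)) + 1)"
    unfolding mu_def using sum.remove[OF fd eD, of "\<lambda>l. card (the (H l)) + 1"] vdel by simp
  have m2: "mu H2 = (card (E - {v}) + 1) + (\<Sum>l\<in>dom H - {e}. card (the (H2 l)) + 1)"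
    unfolding mu_def d using sum.remove[OF fd eD, of "\<lambda>l. card (the (H2 l)) + 1"] vdel by simp
  have "card (E - {v}) < card E" by (rule card_Diff1_less[OF finE]) (use vdel in simp)
  then have "mu H2 < mu H" unfolding m1 m2 r by simp
  moreover have "finite (dom H2)" using d fd by simp
  moreover have "\<forall>l E. H2 l = Some E \<longrightarrow> finite E" using fe finE vdel by auto
  moreover have "\<forall>l. H l = None \<longrightarrow> H2 l = None" using vdel by auto
  ultimately show ?thesis by blast
next
  case (edel e E e' E')
  have eD: "e \<in> dom H" using edel by blast
  have d: "dom H2 = dom H - {e}" using edel by auto
  have r: "(\<Sum>l\<in>dom H - {e}. card (the (H2 l)) + 1) = (\<Sum>l\<in>dom H - {e}. card (the (H l)) + 1)"
    by (rule sum.cong) (use edel in auto)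
  have m1: "mu H = (card E + 1) + (\<Sum>l\<in>dom H - {e}. card (the (H l)) + 1)"
    unfolding mu_def using sum.remove[OF fd eD, of "\<lambda>l. card (the (H l)) + 1"] edel by simp
  have m2: "mu H2 = (\<Sum>l\<in>dom H - {e}. card (the (H2 l)) + 1)"
    unfolding mu_def d by simp
  have "mu H2 < mu H" unfolding m1 m2 r by simp
  moreover have "finite (dom H2)" using d fd by simp
  moreover have "\<forall>l E. H2 l = Some E \<longrightarrow> finite E" using fe edel by auto
  moreover have "\<forall>l. H l = None \<longrightarrow> H2 l = None" using edel by auto
  ultimately show ?thesis by blast
qed

lemma gyo_term:
  "finite (dom H) \<Longrightarrow> (\<forall>l E. H l = Some E \<longrightarrow> finite E)
    \<Longrightarrow> \<exists>H'. gyo_fix H H' \<and> (\<forall>l. H l = None \<longrightarrow> H' l = None)"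
proof (induction "mu H" arbitrary: H rule: less_induct)
  case less
  show ?case
  proof (cases "\<exists>H2. gyo_step H H2")
    case False
    then have "gyo_fix H H" unfolding gyo_fix_def by simp
    then show ?thesis by blast
  next
    case True
    then obtain H2 where st: "gyo_step H H2" by blast
    note p = gyo_step_props[OF st less.prems]
    then obtain H' where H': "gyo_fix H2 H'" "\<forall>l. H2 l = None \<longrightarrow> H' l = None"
      using less.hyps[of H2] by blast
    have "gyo_fix H H'" using H'(1) st unfolding gyo_fix_def
      by (simp add: converse_rtranclp_into_rtranclp)
    then show ?thesis using H'(2) p by blast
  qed
qed

lemma del_many:
  assumes "finite T" "a0 \<notin> T" "H0 a0 = Some A0" "\<forall>t\<in>T. \<exists>E. H0 t = Some E \<and> E \<subseteq> A0"
  shows "gyo_step\<^sup>*\<^sup>* H0 (\<lambda>l. if l \<in> T then None else H0 l)"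
  using assms
proof (induction T rule: finite_induct)
  case empty
  then show ?case by simp
next
  case (insert t T)
  let ?HT = "\<lambda>l. if l \<in> T then None else H0 l"
  have IH: "gyo_step\<^sup>*\<^sup>* H0 ?HT" using insert by simp
  obtain E where E: "H0 t = Some E" "E \<subseteq> A0" using insert.prems by auto
  have "gyo_step ?HT (?HT(t := None))"
    by (rule gyo_step.edel[where E=E and e'=a0 and E'=A0]) (use insert E in auto)
  moreover have "?HT(t := None) = (\<lambda>l. if l \<in> insert t T then None else H0 l)" by (rule ext) auto
  ultimately show ?case using IH by (metis rtranclp.rtrancl_into_rtrancl)
qed

locale hq =
  fixes P :: "'w cqap" and f :: "'w \<Rightarrow> nat"
  assumes fin: "\<forall>A\<in>set (atoms P). finite A" and hier: "hierarchical P"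
    and fdom: "free_dominant P" and idom: "input_dominant P"
    and disj: "inp P \<inter> outp P = {}" and injf: "inj_on f (qvars P)"
begin

definition kind :: "'w \<Rightarrow> nat" where
  "kind z = (if z \<in> inp P then 0 else if z \<in> outp P then 1 else 2)"

definition ab :: "'w \<Rightarrow> 'w \<Rightarrow> bool" where
  "ab y x \<longleftrightarrow> x \<in> qvars P \<and> y \<in> qvars P \<and> (atoms_of P x \<subset> atoms_of P y
     \<or> (atoms_of P x = atoms_of P y \<and> (kind y < kind x \<or> (kind y = kind x \<and> f y < f x))))"

lemma finV: "finite (qvars P)" using fin unfolding qvars_def by auto

lemma ab_trans: "ab z y \<Longrightarrow> ab y x \<Longrightarrow> ab z x"
  unfolding ab_def by auto

lemma ab_irrefl: "\<not> ab x x" unfolding ab_def by auto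

lemma ab_sub: "ab y x \<Longrightarrow> atoms_of P x \<subseteq> atoms_of P y" unfolding ab_def by auto

lemma ab_V: "ab y x \<Longrightarrow> x \<in> qvars P \<and> y \<in> qvars P" unfolding ab_def by auto

lemma atoms_ne: "x \<in> qvars P \<Longrightarrow> atoms_of P x \<noteq> {}"
  using in_qvars_atom[of x P] unfolding atoms_of_def by blast

lemma ab_cmp:
  assumes x: "x \<in> qvars P" and y: "y \<in> qvars P" and xy: "x \<noteq> y"
    and i: "atoms_of P x \<inter> atoms_of P y \<noteq> {}"
  shows "ab x y \<or> ab y x"
proof -
  have h: "atoms_of P x \<subseteq> atoms_of P y \<or> atoms_of P y \<subseteq> atoms_of P x"
    using hier x y i unfolding hierarchical_def by blast
  have fxy: "f x \<noteq> f y" using injf x y xy unfolding inj_on_def by blast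
  show ?thesis
  proof (cases "atoms_of P x = atoms_of P y")
    case True
    have "kind x < kind y \<or> kind y < kind x \<or> (kind x = kind y \<and> (f x < f y \<or> f y < f x))"
      using fxy by linarith
    then show ?thesis using True x y unfolding ab_def by auto
  next
    case False
    then show ?thesis using h x y unfolding ab_def by auto
  qed
qed

lemma ab_chain: "ab y1 x \<Longrightarrow> ab y2 x \<Longrightarrow> y1 = y2 \<or> ab y1 y2 \<or> ab y2 y1"
proof -
  assume a: "ab y1 x" "ab y2 x"
  have "atoms_of P x \<noteq> {}" using atoms_ne ab_V[OF a(1)] by blast
  then have "atoms_of P y1 \<inter> atoms_of P y2 \<noteq> {}" using ab_sub[OF a(1)] ab_sub[OF a(2)] by blast
  then show ?thesis using ab_cmp ab_V[OF a(1)] ab_V[OF a(2)] by blast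
qed

lemma low_ex:
  assumes "ab y x"
  shows "\<exists>p. ab p x \<and> (\<forall>z. ab z x \<longrightarrow> z = p \<or> ab z p)"
proof -
  have f: "finite {y. ab y x}" using finV ab_V by (metis (mono_tags, lifting) mem_Collect_eq rev_finite_subset subsetI)
  have ne: "{y. ab y x} \<noteq> {}" using assms by blast
  have cmp: "\<forall>a\<in>{y. ab y x}. \<forall>b\<in>{y. ab y x}. a = b \<or> ab b a \<or> ab a b"
    using ab_chain by blast
  have tr: "\<And>a b c. ab b a \<Longrightarrow> ab c b \<Longrightarrow> ab c a" using ab_trans by blast
  have "\<exists>p\<in>{y. ab y x}. \<forall>z\<in>{y. ab y x}. z = p \<or> ab z p"
    by (rule lowest_exists[of "{y. ab y x}" "\<lambda>p z. ab z p", OF f ne tr cmp])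
  then show ?thesis by blast
qed

definition om :: "'w vo" where
  "om x = (if \<exists>y. ab y x then Some (SOME p. ab p x \<and> (\<forall>z. ab z x \<longrightarrow> z = p \<or> ab z p)) else None)"

lemma om_Some: "om x = Some p \<Longrightarrow> ab p x \<and> (\<forall>z. ab z x \<longrightarrow> z = p \<or> ab z p)"
proof -
  assume a: "om x = Some p"
  then obtain y where y: "ab y x" unfolding om_def by (auto split: if_splits)
  then have ex: "\<exists>y. ab y x" by blast
  have "om x = Some (SOME p. ab p x \<and> (\<forall>z. ab z x \<longrightarrow> z = p \<or> ab z p))"
    unfolding om_def using ex by (rule if_P)
  then have "p = (SOME p. ab p x \<and> (\<forall>z. ab z x \<longrightarrow> z = p \<or> ab z p))"
    using a by simp
  then show ?thesis using someI_ex[OF low_ex[OF y]] by simp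
qed

lemma om_ex: "ab y x \<Longrightarrow> \<exists>p. om x = Some p" unfolding om_def by auto

lemma anc_ab: "anc om x y \<Longrightarrow> ab y x"
  unfolding anc_def
proof (induction rule: trancl_induct)
  case (base y)
  then show ?case using om_Some unfolding par_rel_def by auto
next
  case (step y z)
  then have "ab z y" using om_Some unfolding par_rel_def by auto
  then show ?case using step.IH ab_trans by blast
qed

lemma ab_anc_aux:
  "\<forall>x. card {z. ab z x \<and> ab y z} = n \<longrightarrow> ab y x \<longrightarrow> (x, y) \<in> (par_rel om)\<^sup>+"
proof (induction n rule: less_induct)
  case (less n)
  show ?case
  proof (intro allI impI)
    fix x assume n: "card {z. ab z x \<and> ab y z} = n" and a: "ab y x"
    obtain p where p: "om x = Some p" using om_ex[OF a] by blast
    have pp: "ab p x" "\<forall>z. ab z x \<longrightarrow> z = p \<or> ab z p" using om_Some[OF p] by auto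
    have xp: "(x, p) \<in> par_rel om" unfolding par_rel_def using p by simp
    show "(x, y) \<in> (par_rel om)\<^sup>+"
    proof (cases "p = y")
      case True
      then show ?thesis using xp by blast
    next
      case False
      then have yp: "ab y p" using pp a by blast
      have sub: "{z. ab z p \<and> ab y z} \<subseteq> {z. ab z x \<and> ab y z}" using pp(1) ab_trans by blast
      have pin: "p \<in> {z. ab z x \<and> ab y z}" using pp(1) yp by simp
      have pout: "p \<notin> {z. ab z p \<and> ab y z}" using ab_irrefl by simp
      have finB: "finite {z. ab z x \<and> ab y z}"
        by (rule finite_subset[OF _ finV]) (use ab_V in blast)
      have "card {z. ab z p \<and> ab y z} < card {z. ab z x \<and> ab y z}"
        by (rule psubset_card_mono[OF finB]) (use sub pin pout in blast)
      then have "(p, y) \<in> (par_rel om)\<^sup>+" using less.IH n yp by blast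
      then show ?thesis by (rule trancl_into_trancl2[OF xp])
    qed
  qed
qed

lemma anc_iff: "anc om x y \<longleftrightarrow> ab y x"
  using anc_ab ab_anc_aux unfolding anc_def by blast

lemma vo: "is_vo P om"
  unfolding is_vo_def
proof (intro conjI allI impI ballI)
  fix x assume "x \<notin> qvars P" then show "om x = None" unfolding om_def ab_def by auto
next
  fix x y assume "om x = Some y" then show "y \<in> qvars P" using om_Some ab_V by blast
next
  fix x show "\<not> anc om x x" using anc_iff ab_irrefl by blast
next
  fix A x y assume A: "A \<in> set (atoms P)" and x: "x \<in> A" and y: "y \<in> A"
  obtain i where i: "i < length (atoms P)" "atoms P ! i = A" using A by (auto simp: in_set_conv_nth)
  have xV: "x \<in> qvars P" and yV: "y \<in> qvars P" using A x y unfolding qvars_def by auto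
  have "i \<in> atoms_of P x \<inter> atoms_of P y" using i x y unfolding atoms_of_def by auto
  then show "x = y \<or> anc om x y \<or> anc om y x"
    using ab_cmp[OF xV yV] anc_iff by blast
qed

lemma access: "access_top P om"
  unfolding access_top_def
proof (intro allI impI)
  fix x y assume "anc om x y"
  then have a: "ab y x" using anc_iff by blast
  then have V: "x \<in> qvars P" "y \<in> qvars P" using ab_V by auto
  show "\<not> (y \<in> bound_vars P \<and> x \<in> free_vars P) \<and> \<not> (y \<in> outp P \<and> x \<in> inp P)"
  proof (cases "atoms_of P x \<subset> atoms_of P y")
    case True
    then have d: "dominates P y x" unfolding dominates_def by simp
    have 1: "x \<in> free_vars P \<Longrightarrow> y \<in> free_vars P" using fdom V d unfolding free_dominant_def by blast
    have 2: "x \<in> inp P \<Longrightarrow> y \<in> inp P" using idom V d unfolding input_dominant_def by blast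
    show ?thesis using 1 2 disj unfolding bound_vars_def by blast
  next
    case False
    then have k: "kind y \<le> kind x" using a unfolding ab_def by auto
    have 1: "x \<in> free_vars P \<Longrightarrow> y \<in> free_vars P"
      using k unfolding kind_def free_vars_def by (auto split: if_splits)
    have 2: "x \<in> inp P \<Longrightarrow> y \<in> inp P"
      using k unfolding kind_def by (auto split: if_splits)
    show ?thesis using 1 2 disj unfolding bound_vars_def by blast
  qed
qed

lemma K:
  assumes at: "atom_at P om i Z" and Z: "Z \<in> subtree om X"
  shows "Svars P om X \<subseteq> atoms P ! i"
proof -
  have iZ: "i \<in> atoms_of P Z" using at unfolding atom_at_def atoms_of_def by simp
  have "Z = X \<or> anc om Z X" using Z unfolding subtree_def by simp
  then have "atoms_of P Z \<subseteq> atoms_of P X" using anc_iff ab_sub by blast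
  then have iX: "i \<in> atoms_of P X" using iZ by blast
  show ?thesis
  proof
    fix Y assume "Y \<in> Svars P om X"
    then have "Y = X \<or> anc om X Y" unfolding Svars_def dep_def by auto
    then have "atoms_of P X \<subseteq> atoms_of P Y" using anc_iff ab_sub by blast
    then show "Y \<in> atoms P ! i" using iX unfolding atoms_of_def by blast
  qed
qed

lemma leaves0: "leaves_below P om (\<lambda>_. {}) X = {Atm i | i. \<exists>Z\<in>subtree om X. atom_at P om i Z}"
  unfolding leaves_below_def by auto

lemma R0: "R_below P om (\<lambda>_. {}) X = {Atm i | i. \<exists>Z\<in>subtree om X. atom_at P om i Z}"
  unfolding R_below_def by auto

end

context hq begin

lemma cands_fin: "candidates P om ind X \<subseteq> {..<length (atoms P)}"
  unfolding candidates_def by auto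

lemma valid: "valid_ind P om (\<lambda>_. {})"
  unfolding valid_ind_def
proof (intro conjI allI impI ballI)
  fix X :: 'w assume X: "X \<in> qvars P"
  let ?H0 = "gyo_hypergraph P om (\<lambda>_. {}) X"
  let ?C = "candidates P om (\<lambda>_. {}) X"
  let ?T = "Ind X ` ?C"
  let ?n = "length (atoms P)"
  have XS: "X \<in> Svars P om X" unfolding Svars_def by simp
  obtain a W where W: "W \<in> subtree om X" "atom_at P om a W"
    using coverage[OF fin vo X XS] by blast
  have finC: "finite ?C" using cands_fin finite_subset by blast
  have a0: "Atm a \<notin> ?T" by auto
  have aR: "Atm a \<in> R_below P om (\<lambda>_. {}) X" unfolding R0 using W by blast
  have H0a: "?H0 (Atm a) = Some (atoms P ! a)" unfolding gyo_hypergraph_def using aR by simp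
  have Ka: "Svars P om X \<subseteq> atoms P ! a" using K[OF W(2) W(1)] .
  have Tsub: "\<forall>t\<in>?T. \<exists>E. ?H0 t = Some E \<and> E \<subseteq> atoms P ! a"
  proof
    fix t assume "t \<in> ?T"
    then obtain i where i: "i \<in> ?C" "t = Ind X i" by blast
    then have "?H0 t = Some (atoms P ! i \<inter> Svars P om X)" unfolding gyo_hypergraph_def by simp
    then show "\<exists>E. ?H0 t = Some E \<and> E \<subseteq> atoms P ! a" using Ka by blast
  qed
  let ?HT = "\<lambda>l. if l \<in> ?T then None else ?H0 l"
  have r1: "gyo_step\<^sup>*\<^sup>* ?H0 ?HT"
    by (rule del_many[OF _ a0 H0a Tsub]) (use finC in simp)
  have Rsub: "R_below P om (\<lambda>_. {}) X \<subseteq> Atm ` {..<?n}"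
    unfolding R0 atom_at_def by auto
  have domH0: "dom ?H0 \<subseteq> Atm ` {..<?n} \<union> ?T"
    using Rsub unfolding gyo_hypergraph_def by (auto split: if_splits)
  have fH0: "finite (dom ?H0)" by (rule finite_subset[OF domH0]) (use finC in simp)
  have "dom ?HT \<subseteq> dom ?H0" by (auto split: if_splits)
  then have fd: "finite (dom ?HT)" using fH0 finite_subset by blast
  have fe: "\<forall>l E. ?HT l = Some E \<longrightarrow> finite E"
  proof (intro allI impI)
    fix l E assume "?HT l = Some E"
    then have h: "?H0 l = Some E" by (simp split: if_splits)
    then have lin: "l \<in> Atm ` {..<?n} \<union> ?T" using domH0 by blast
    show "finite E"
    proof (cases l)
      case (Atm i)
      then have "i < ?n" using lin by auto
      then have "atoms P ! i \<in> set (atoms P)" by simp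
      then show ?thesis using fin h Atm unfolding gyo_hypergraph_def by (auto split: if_splits)
    next
      case (Ind Z i)
      then have "i \<in> ?C" "Z = X" using lin by auto
      then have "i < ?n" using cands_fin by blast
      then have "atoms P ! i \<in> set (atoms P)" by simp
      then have "finite (atoms P ! i \<inter> Svars P om Z)" using fin by blast
      then show ?thesis using h Ind unfolding gyo_hypergraph_def by (auto split: if_splits)
    qed
  qed
  obtain H' where H': "gyo_fix ?HT H'" "\<forall>l. ?HT l = None \<longrightarrow> H' l = None"
    using gyo_term[OF fd fe] by blast
  have "gyo_fix ?H0 H'" using r1 H'(1) unfolding gyo_fix_def by (meson rtranclp_trans)
  moreover have "(\<lambda>_. {}) X = {i \<in> ?C. H' (Ind X i) \<noteq> None}" using H'(2) by auto
  ultimately show "\<exists>H'. gyo_fix ?H0 H' \<and> (\<lambda>_. {}) X = {i \<in> ?C. H' (Ind X i) \<noteq> None}" by blast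
qed simp

lemma ext0: "is_ext_vo P om (\<lambda>_. {})" unfolding is_ext_vo_def using vo valid by simp

lemma static1:
  assumes ne: "qvars P \<noteq> {}"
  shows "static_w P om (\<lambda>_. {}) = 1"
proof -
  have all1: "\<And>X. X \<in> qvars P \<Longrightarrow>
      rho_star (leaves_below P om (\<lambda>_. {}) X) (leaf_sch P om) (Svars P om X) = 1"
  proof -
    fix X assume X: "X \<in> qvars P"
    have XS: "X \<in> Svars P om X" unfolding Svars_def by simp
    obtain a W where W: "W \<in> subtree om X" "atom_at P om a W"
      using coverage[OF fin vo X XS] by blast
    have aL: "Atm a \<in> leaves_below P om (\<lambda>_. {}) X" unfolding leaves0 using W by blast
    show "rho_star (leaves_below P om (\<lambda>_. {}) X) (leaf_sch P om) (Svars P om X) = 1"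
    proof (rule rho_1[OF leaves_fin[OF fin valid] aL])
      show "Svars P om X \<subseteq> leaf_sch P om (Atm a)" using K[OF W(2) W(1)] by simp
      show "Svars P om X \<noteq> {}" using XS by blast
    qed
  qed
  obtain X0 where X0: "X0 \<in> qvars P" using ne by blast
  have "(\<lambda>X. rho_star (leaves_below P om (\<lambda>_. {}) X) (leaf_sch P om) (Svars P om X)) ` qvars P = {1}"
  proof
    show "(\<lambda>X. rho_star (leaves_below P om (\<lambda>_. {}) X) (leaf_sch P om) (Svars P om X)) ` qvars P \<subseteq> {1}"
    proof (rule image_subsetI)
      fix X assume "X \<in> qvars P"
      then show "rho_star (leaves_below P om (\<lambda>_. {}) X) (leaf_sch P om) (Svars P om X) \<in> {1}"
        using all1 by (simp only: singleton_iff)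
    qed
    have e1: "1 = rho_star (leaves_below P om (\<lambda>_. {}) X0) (leaf_sch P om) (Svars P om X0)"
      using all1[OF X0] by simp
    have "1 \<in> (\<lambda>X. rho_star (leaves_below P om (\<lambda>_. {}) X) (leaf_sch P om) (Svars P om X)) ` qvars P"
      unfolding image_iff using X0 e1 by blast
    then show "{1} \<subseteq> (\<lambda>X. rho_star (leaves_below P om (\<lambda>_. {}) X) (leaf_sch P om) (Svars P om X)) ` qvars P"
      by (simp only: insert_subset empty_subsetI simp_thms)
  qed
  then show ?thesis unfolding static_w_def by simp
qed

lemma delta0:
  assumes ne: "qvars P \<noteq> {}"
  shows "dyn_delta P om (\<lambda>_. {}) = 0"
proof -
  let ?S = "{(X, l). X \<in> qvars P \<and> l \<in> leaves_below P om (\<lambda>_. {}) X}"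
  let ?h = "\<lambda>(X, l). rho_star (leaves_below P om (\<lambda>_. {}) X) (leaf_sch P om)
        (Svars P om X - leaf_sch P om l)"
  have all0: "?h s = 0" if s: "s \<in> ?S" for s
  proof -
    obtain X l where sl: "s = (X, l)" "X \<in> qvars P" "l \<in> leaves_below P om (\<lambda>_. {}) X"
      using s by blast
    then obtain i Z where l: "l = Atm i" "Z \<in> subtree om X" "atom_at P om i Z"
      unfolding leaves0 by blast
    have e: "Svars P om X - leaf_sch P om l = {}" using K[OF l(3) l(2)] l(1) by simp
    show ?thesis unfolding sl(1) prod.case e by (rule rho_0[OF leaves_fin[OF fin valid]])
  qed
  obtain X where X: "X \<in> qvars P" using ne by blast
  have XS: "X \<in> Svars P om X" unfolding Svars_def by simp
  obtain a W where W: "W \<in> subtree om X" "atom_at P om a W"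
    using coverage[OF fin vo X XS] by blast
  have aL: "Atm a \<in> leaves_below P om (\<lambda>_. {}) X" unfolding leaves0 using W by blast
  have "(X, Atm a) \<in> ?S" using X aL by simp
  then have hx: "0 = ?h (X, Atm a)" using all0 by (simp only:)
  have "?h ` ?S = {0}"
  proof
    show "?h ` ?S \<subseteq> {0}"
    proof (rule image_subsetI)
      fix s assume "s \<in> ?S"
      then show "?h s \<in> {0}" using all0 by (simp only: singleton_iff)
    qed
    have "0 \<in> ?h ` ?S" unfolding image_iff using hx \<open>(X, Atm a) \<in> ?S\<close> by blast
    then show "{0} \<subseteq> ?h ` ?S" by (simp only: insert_subset empty_subsetI simp_thms)
  qed
  then show ?thesis unfolding dyn_delta_def by simp
qed

end

lemma frac_atoms: "atoms (fracture Q) = map (frac_atom Q) [0..<length (atoms Q)]"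
  unfolding fracture_def by simp

lemma frac_fin:
  assumes "wf_cqap Q"
  shows "\<forall>A\<in>set (atoms (fracture Q)). finite A"
proof
  fix A assume "A \<in> set (atoms (fracture Q))"
  then have "A \<in> frac_atom Q ` {0..<length (atoms Q)}" unfolding frac_atoms by simp
  then obtain i where i: "i < length (atoms Q)" "A = frac_atom Q i" by auto
  then have "atoms Q ! i \<in> set (atoms Q)" by simp
  then have "finite (atoms Q ! i)" using assms unfolding wf_cqap_def by blast
  then show "finite A" unfolding i(2) frac_atom_def by simp
qed

lemma frac_ne:
  assumes "qvars Q \<noteq> {}"
  shows "qvars (fracture Q) \<noteq> {}"
proof -
  obtain v where "v \<in> qvars Q" using assms by blast
  then obtain i where i: "i < length (atoms Q)" "v \<in> atoms Q ! i" using in_qvars_atom[of v Q] by blast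
  have "i \<in> set [0..<length (atoms Q)]" using i(1) by simp
  then have A: "frac_atom Q i \<in> set (atoms (fracture Q))" unfolding frac_atoms set_map by (rule imageI)
  have "frac_atom Q i \<noteq> {}"
  proof (cases "v \<in> inp Q")
    case True
    then have "(v, Some (frac_rep Q i)) \<in> frac_atom Q i" unfolding frac_atom_def
      by (intro UnI2 imageI IntI i(2))
    then show ?thesis by (rule mem_ne)
  next
    case False
    then have "(v, None) \<in> frac_atom Q i" unfolding frac_atom_def
      by (intro UnI1 imageI DiffI i(2))
    then show ?thesis by (rule mem_ne)
  qed
  then obtain z where "z \<in> frac_atom Q i" by blast
  then have "z \<in> qvars (fracture Q)" using A unfolding qvars_def by (rule UnionI[rotated])
  then show ?thesis by (rule mem_ne)
qed

lemma frac_disj: "inp (fracture Q) \<inter> outp (fracture Q) = {}"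
proof -
  have 1: "inp (fracture Q) = {(x, Some (frac_rep Q i)) | x i. i < length (atoms Q) \<and> x \<in> atoms Q ! i \<inter> inp Q}"
    unfolding fracture_def by simp
  have 2: "outp (fracture Q) = (\<lambda>v. (v, None)) ` outp Q" unfolding fracture_def by simp
  show ?thesis unfolding 1 2 by auto
qed

theorem proposition9p2:
  fixes Q :: "'v cqap"
  assumes "wf_cqap Q" and "CQAP0 Q" and "qvars Q \<noteq> {}"
  shows "cqap_delta Q = 0 \<and> cqap_w Q = 1"
proof -
  let ?P = "fracture Q"
  have fin: "\<forall>A\<in>set (atoms ?P). finite A" using frac_fin[OF assms(1)] .
  have ne: "qvars ?P \<noteq> {}" using frac_ne[OF assms(3)] .
  have finV: "finite (qvars ?P)" using fin unfolding qvars_def by auto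
  obtain f :: "('v \<times> nat option) \<Rightarrow> nat" where injf: "inj_on f (qvars ?P)"
    using finite_imp_inj_to_nat_seg[OF finV] by blast
  have c0: "hierarchical ?P" "free_dominant ?P" "input_dominant ?P"
    using assms(2) unfolding CQAP0_def by auto
  interpret hq ?P f
    by unfold_locales (rule fin c0 frac_disj injf)+
  let ?W = "width_pairs Q"
  have Weq: "?W = (\<lambda>(\<omega>, ind). (dyn_delta ?P \<omega> ind, static_w ?P \<omega> ind))
      ` {(\<omega>, ind). is_ext_vo ?P \<omega> ind \<and> access_top ?P \<omega>}"
    unfolding width_pairs_def by auto
  have finW: "finite ?W" unfolding Weq using pairs_fin[OF fin] by simp
  have mem: "(0, 1) \<in> ?W"
  proof -
    have "(dyn_delta ?P om (\<lambda>_. {}), static_w ?P om (\<lambda>_. {})) \<in> ?W"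
      unfolding width_pairs_def using ext0 access by blast
    then show ?thesis unfolding delta0[OF ne] static1[OF ne] .
  qed
  have lb: "d \<ge> 0 \<and> w \<ge> 1" if dw: "(d, w) \<in> ?W" for d w
  proof -
    obtain \<omega> ind where e: "(d, w) = (dyn_delta ?P \<omega> ind, static_w ?P \<omega> ind)" "is_ext_vo ?P \<omega> ind"
      using dw unfolding width_pairs_def by blast
    show ?thesis using lower_bounds[OF fin ne e(2)] e(1) by simp
  qed
  have d0: "cqap_delta Q = 0"
    unfolding cqap_delta_def
  proof (rule Min_eqI)
    show "finite (fst ` ?W)" using finW by simp
    show "\<And>y. y \<in> fst ` ?W \<Longrightarrow> 0 \<le> y" using lb by force
    show "0 \<in> fst ` ?W" using mem by force
  qed
  have w1: "cqap_w Q = 1"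
    unfolding cqap_w_def d0
  proof (rule Min_eqI)
    have "{w. (0, w) \<in> ?W} \<subseteq> snd ` ?W" by force
    then show "finite {w. (0, w) \<in> ?W}" using finW finite_subset by blast
    show "\<And>y. y \<in> {w. (0, w) \<in> ?W} \<Longrightarrow> 1 \<le> y" using lb by blast
    show "1 \<in> {w. (0, w) \<in> ?W}" using mem by simp
  qed
  show ?thesis using d0 w1 by simp
qed

end
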